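(* Let $s\in\mathbb N$, $D>0$, and let $g_1,\dots,g_s$ be measurable functions on $[0,1]$ with $|g_i(x)|\le D$ for all $i$ and $x\in[0,1]$, such that $$\max_{\theta}\Big|\int_0^1\prod_{i=1}^s\Big(\frac{g_i(x)}{D}\Big)^{\theta_i}dx\Big|<2^{-s},$$ where the maximum is over all $\theta=(\theta_i)_{i=1}^s\in\{0,1\}^s$ with $\theta\neq(0,\dots,0)$. Then there exist measurable functions $h_1,\dots,h_s$ on $[0,2]$ such that $h_i=g_i$ on $[0,1]$, $|h_i(x)|\le D$ for all $x\in[0,2]$, and $\{h_i\}_{i=1}^s$ is multiplicative on $[0,2]$, i.e. $\int_0^2 h_{i_1}(x)\cdots h_{i_k}(x)\,dx=0$ for every $k\ge1$ and all $1\le i_1<\dots<i_k\le s$. *)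

theory Defs
  imports "HOL-Analysis.Analysis"
begin

end

theory Submission
  imports Defs
begin

definition sg :: "nat \<Rightarrow> nat set \<Rightarrow> real" where "sg i E = (if i \<in> E then -1 else 1)"
definition chi :: "nat set \<Rightarrow> nat set \<Rightarrow> real" where "chi T E = (\<Prod>i\<in>T. sg i E)"

lemma chi_sq: "chi T E * chi T E = 1"
proof -
  have "chi T E * chi T E = (\<Prod>i\<in>T. sg i E * sg i E)" unfolding chi_def by (simp add: prod.distrib)
  also have "\<dots> = 1" by (rule prod.neutral) (simp add: sg_def)
  finally show ?thesis .
qed

lemma chi_lift: "finite W \<Longrightarrow> T \<subseteq> W \<Longrightarrow> chi T E = (\<Prod>i\<in>W. if i \<in> T then sg i E else 1)"
  unfolding chi_def by (simp add: prod.If_cases Int_absorb2 Int_commute)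

lemma chi_mult: assumes "finite S" "finite T"
  shows "chi T E * chi S E = chi ((T-S)\<union>(S-T)) E"
proof -
  let ?W = "T \<union> S"
  have "chi T E * chi S E = (\<Prod>i\<in>?W. (if i \<in> T then sg i E else 1) * (if i \<in> S then sg i E else 1))"
    using assms by (simp add: chi_lift[of ?W] prod.distrib)
  also have "\<dots> = (\<Prod>i\<in>?W. if i \<in> (T-S)\<union>(S-T) then sg i E else 1)"
    by (rule prod.cong) (auto simp: sg_def)
  also have "\<dots> = chi ((T-S)\<union>(S-T)) E" using assms by (subst chi_lift[of ?W]) auto
  finally show ?thesis .
qed

lemma chi_sum_zero:
  assumes "finite U" "A \<subseteq> U" "A \<noteq> {}"
  shows "(\<Sum>E\<in>Pow U. chi A E) = 0"
proof -
  obtain a where a: "a \<in> A" using assms by auto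
  define U' where "U' = U - {a}"
  have U: "U = insert a U'" "a \<notin> U'" using a assms U'_def by auto
  have fin: "finite U'" using assms U'_def by auto
  have PU: "Pow U = Pow U' \<union> insert a ` Pow U'" using U Pow_insert by simp
  have disj: "Pow U' \<inter> insert a ` Pow U' = {}" using U by auto
  have inj: "inj_on (insert a) (Pow U')" using U unfolding inj_on_def
    by (metis Diff_insert_absorb PowD subsetD)
  have fa: "finite A" using assms finite_subset by blast
  have c1: "chi A E = (\<Prod>i\<in>A-{a}. sg i E)" if "E \<subseteq> U'" for E
    using that U a fa by (auto simp: chi_def prod.remove sg_def)
  have c2: "chi A (insert a E) = - (\<Prod>i\<in>A-{a}. sg i E)" if "E \<subseteq> U'" for E
  proof -
    have "chi A (insert a E) = sg a (insert a E) * (\<Prod>i\<in>A-{a}. sg i (insert a E))"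
      using a fa by (simp add: chi_def prod.remove)
    also have "(\<Prod>i\<in>A-{a}. sg i (insert a E)) = (\<Prod>i\<in>A-{a}. sg i E)"
      by (rule prod.cong) (auto simp: sg_def)
    finally show ?thesis by (simp add: sg_def)
  qed
  have "(\<Sum>E\<in>Pow U. chi A E) = (\<Sum>E\<in>Pow U'. chi A E) + (\<Sum>E\<in>insert a ` Pow U'. chi A E)"
    using PU disj fin by (simp add: sum.union_disjoint)
  also have "(\<Sum>E\<in>insert a ` Pow U'. chi A E) = (\<Sum>E\<in>Pow U'. chi A (insert a E))"
    using inj by (simp add: sum.reindex)
  also have "\<dots> = - (\<Sum>E\<in>Pow U'. chi A E)"
    by (simp add: c1 c2 sum_negf)
  finally show ?thesis by simp
qed

lemma chi_orth:
  assumes "finite U" "S \<subseteq> U" "T \<subseteq> U"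
  shows "(\<Sum>E\<in>Pow U. chi T E * chi S E) = (if T = S then 2 ^ card U else 0)"
proof (cases "T = S")
  case True
  then show ?thesis using assms by (simp add: chi_sq card_Pow)
next
  case False
  have fin: "finite S" "finite T" using assms finite_subset by auto
  have "(\<Sum>E\<in>Pow U. chi T E * chi S E) = (\<Sum>E\<in>Pow U. chi ((T-S)\<union>(S-T)) E)"
    using fin by (simp add: chi_mult)
  also have "\<dots> = 0" using False assms by (intro chi_sum_zero) auto
  finally show ?thesis using False by simp
qed

lemma exist_sets:
  fixes p :: "'a \<Rightarrow> real"
  assumes "finite J" "\<forall>j\<in>J. p j \<ge> 0"
  shows "\<exists>A. (\<forall>j\<in>J. A j \<in> sets lborel \<and> A j \<subseteq> {1<..1 + sum p J} \<and> emeasure lborel (A j) = ennreal (p j))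
            \<and> (\<forall>j\<in>J. \<forall>k\<in>J. j \<noteq> k \<longrightarrow> A j \<inter> A k = {})"
  using assms
proof (induction J rule: finite_induct)
  case empty
  then show ?case by auto
next
  case (insert j J)
  then obtain A where A: "\<forall>j\<in>J. A j \<in> sets lborel \<and> A j \<subseteq> {1<..1 + sum p J} \<and> emeasure lborel (A j) = ennreal (p j)"
     "\<forall>j\<in>J. \<forall>k\<in>J. j \<noteq> k \<longrightarrow> A j \<inter> A k = {}" by auto
  have pos: "sum p J \<ge> 0" "p j \<ge> 0" using insert by (auto intro: sum_nonneg)
  define A' where "A' = A(j := {1 + sum p J<..1 + sum p J + p j})"
  have s: "sum p (insert j J) = p j + sum p J" using insert by simp
  show ?case
  proof (intro exI[of _ A'] conjI ballI impI)
    fix k assume k: "k \<in> insert j J"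
    show "A' k \<in> sets lborel" using A k unfolding A'_def by (cases "k = j") auto
    show "A' k \<subseteq> {1<..1 + sum p (insert j J)}"
    proof (cases "k = j")
      case True then show ?thesis using pos unfolding A'_def s by auto
    next
      case False then have "A' k = A k" "k \<in> J" using k unfolding A'_def by auto
      then show ?thesis using A pos unfolding s by fastforce
    qed
    show "emeasure lborel (A' k) = ennreal (p k)" using A k pos insert(2) unfolding A'_def by (cases "k = j") auto
  next
    fix k l assume "k \<in> insert j J" "l \<in> insert j J" "k \<noteq> l"
    moreover have D: "A l \<inter> {1 + sum p J<..1 + sum p J + p j} = {}" if "l \<in> J" for l
    proof -
      have "A l \<subseteq> {1<..1 + sum p J}" using A that by blast
      then show ?thesis by auto
    qed
    ultimately show "A' k \<inter> A' l = {}" using A(2) insert(2) unfolding A'_def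
      by (cases "k = j"; cases "l = j") (auto simp: Int_commute)
  qed
qed


lemma sum_ind:
  fixes c :: "'a \<Rightarrow> real"
  assumes "finite J" "\<forall>j\<in>J. \<forall>k\<in>J. j \<noteq> k \<longrightarrow> A j \<inter> A k = {}" "j0 \<in> J" "x \<in> A j0"
  shows "(\<Sum>j\<in>J. indicator (A j) x * c j) = c j0"
proof -
  have "(\<Sum>j\<in>J. indicator (A j) x * c j) = indicator (A j0) x * c j0 + (\<Sum>j\<in>J - {j0}. indicator (A j) x * c j)"
    using assms(1,3) by (rule sum.remove)
  also have "(\<Sum>j\<in>J - {j0}. indicator (A j) x * c j) = 0"
  proof (rule sum.neutral, rule ballI)
    fix j assume "j \<in> J - {j0}"
    then have "x \<notin> A j" using assms by blast
    then show "indicator (A j) x * c j = 0" by simp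
  qed
  finally show ?thesis using assms by simp
qed

lemma sum_ind0:
  fixes c :: "'a \<Rightarrow> real"
  assumes "\<forall>j\<in>J. x \<notin> A j"
  shows "(\<Sum>j\<in>J. indicator (A j) x * c j) = 0"
  using assms by (simp add: sum.neutral)

lemma prod_theta:
  fixes y :: "nat \<Rightarrow> real"
  assumes "T \<subseteq> U" "finite U"
  shows "(\<Prod>i\<in>U. y i ^ (if i \<in> T then 1 else 0)) = (\<Prod>i\<in>T. y i)"
proof -
  have "(\<Prod>i\<in>U. y i ^ (if i \<in> T then 1 else 0)) = (\<Prod>i\<in>U. if i \<in> T then y i else 1)"
    by (rule prod.cong) auto
  also have "\<dots> = (\<Prod>i\<in>T. y i)" using assms by (simp add: prod.If_cases Int_absorb2 Int_commute)
  finally show ?thesis .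
qed

theorem lemma4p3:
  fixes s :: nat and D :: real and g :: "nat \<Rightarrow> real \<Rightarrow> real"
  assumes Dpos: "D > 0"
    and meas: "\<And>i. i \<in> {1..s} \<Longrightarrow> set_borel_measurable lborel {0..1} (g i)"
    and bound: "\<And>i x. i \<in> {1..s} \<Longrightarrow> x \<in> {0..1} \<Longrightarrow> \<bar>g i x\<bar> \<le> D"
    and small: "\<And>\<theta> :: nat \<Rightarrow> nat.
        (\<forall>i\<in>{1..s}. \<theta> i \<in> {0,1}) \<Longrightarrow> (\<exists>i\<in>{1..s}. \<theta> i \<noteq> 0) \<Longrightarrow>
        \<bar>LINT x:{0..1}|lborel. (\<Prod>i=1..s. (g i x / D) ^ \<theta> i)\<bar> < 2 powi (- int s)"
  shows "\<exists>h :: nat \<Rightarrow> real \<Rightarrow> real.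
           (\<forall>i\<in>{1..s}. set_borel_measurable lborel {0..2} (h i)
                        \<and> (\<forall>x\<in>{0..1}. h i x = g i x)
                        \<and> (\<forall>x\<in>{0..2}. \<bar>h i x\<bar> \<le> D))
         \<and> (\<forall>S. S \<subseteq> {1..s} \<and> S \<noteq> {} \<longrightarrow>
                (LINT x:{0..2}|lborel. (\<Prod>i\<in>S. h i x)) = 0)"
proof -
  define U where "U = {1..s}"
  have finU: "finite U" and cardU: "card U = s" unfolding U_def by auto
  define NE where "NE = Pow U - {{}}"
  have finNE: "finite NE" unfolding NE_def using finU by auto
  define a where "a T = (LINT x:{0..1}|lborel. (\<Prod>i\<in>T. g i x / D))" for T
  define p where "p E = (1 - (\<Sum>T\<in>NE. a T * chi T E)) / 2 ^ s" for E
  have pw: "(2::real) powi (- int s) = 1 / 2 ^ s" by (simp add: power_int_minus field_simps)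
  have a_bound: "\<bar>a T\<bar> \<le> 1 / 2 ^ s" if T: "T \<in> NE" for T
  proof -
    define \<theta> where "\<theta> i = (if i \<in> T then 1 else 0::nat)" for i
    have TU: "T \<subseteq> {1..s}" "T \<noteq> {}" using T unfolding NE_def U_def by auto
    have "(\<lambda>x. \<Prod>i=1..s. (g i x / D) ^ \<theta> i) = (\<lambda>x. \<Prod>i\<in>T. g i x / D)"
      unfolding \<theta>_def using TU by (intro ext prod_theta) auto
    moreover have "\<bar>LINT x:{0..1}|lborel. (\<Prod>i=1..s. (g i x / D) ^ \<theta> i)\<bar> < 2 powi (- int s)"
      using TU by (intro small) (auto simp: \<theta>_def)
    ultimately show ?thesis unfolding a_def pw by simp
  qed
  have chi_abs: "\<bar>chi T E\<bar> = 1" for T E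
    unfolding chi_def abs_prod by (rule prod.neutral) (simp add: sg_def)
  have p_nonneg: "p E \<ge> 0" for E
  proof -
    have "\<bar>\<Sum>T\<in>NE. a T * chi T E\<bar> \<le> (\<Sum>T\<in>NE. \<bar>a T * chi T E\<bar>)" by (rule sum_abs)
    also have "\<dots> \<le> (\<Sum>T\<in>NE. 1 / 2 ^ s)"
      by (rule sum_mono) (simp add: abs_mult chi_abs a_bound)
    also have "\<dots> = card NE / 2 ^ s" by simp
    also have "\<dots> \<le> 1"
    proof -
      have "card NE \<le> card (Pow U)" unfolding NE_def using finU by (intro card_mono) auto
      then have "real (card NE) \<le> 2 ^ s" using finU cardU by (simp add: card_Pow)
      then show ?thesis by simp
    qed
    finally show ?thesis unfolding p_def by simp
  qed
  have orth: "(\<Sum>E\<in>Pow U. chi T E * chi S E) = (if T = S then 2 ^ s else 0)" if "S \<subseteq> U" "T \<subseteq> U" for S T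
    using chi_orth[OF finU that] cardU by simp
  have p_char: "(\<Sum>E\<in>Pow U. p E * chi S E) = - a S" if S: "S \<in> NE" for S
  proof -
    have SU: "S \<subseteq> U" "S \<noteq> {}" using S unfolding NE_def by auto
    have "(\<Sum>E\<in>Pow U. p E * chi S E) = ((\<Sum>E\<in>Pow U. chi S E) - (\<Sum>E\<in>Pow U. \<Sum>T\<in>NE. a T * (chi T E * chi S E))) / 2 ^ s"
    proof -
      have "p E * chi S E = (chi S E - (\<Sum>T\<in>NE. a T * (chi T E * chi S E))) / 2 ^ s" for E
        unfolding p_def by (simp add: sum_distrib_right diff_divide_distrib left_diff_distrib mult.assoc)
      then show ?thesis by (simp add: sum_divide_distrib[symmetric] sum_subtractf)
    qed
    also have "(\<Sum>E\<in>Pow U. chi S E) = 0" using chi_sum_zero[OF finU SU] .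
    also have "(\<Sum>E\<in>Pow U. \<Sum>T\<in>NE. a T * (chi T E * chi S E)) = (\<Sum>T\<in>NE. a T * (\<Sum>E\<in>Pow U. chi T E * chi S E))"
      by (simp add: sum.swap[of _ "Pow U"] sum_distrib_left)
    also have "\<dots> = (\<Sum>T\<in>NE. if T = S then a S * 2 ^ s else 0)"
      using SU by (intro sum.cong refl) (auto simp: orth NE_def)
    also have "\<dots> = a S * 2 ^ s" using S finNE by simp
    finally show ?thesis by simp
  qed
  have p_sum: "(\<Sum>E\<in>Pow U. p E) = 1"
  proof -
    have "(\<Sum>E\<in>Pow U. p E) = ((\<Sum>E\<in>Pow U. 1) - (\<Sum>E\<in>Pow U. \<Sum>T\<in>NE. a T * chi T E)) / 2 ^ s"
      unfolding p_def by (simp add: sum_divide_distrib[symmetric] sum_subtractf)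
    also have "(\<Sum>E\<in>Pow U. \<Sum>T\<in>NE. a T * chi T E) = (\<Sum>T\<in>NE. a T * (\<Sum>E\<in>Pow U. chi T E))"
      by (simp add: sum.swap[of _ "Pow U"] sum_distrib_left)
    also have "\<dots> = 0" using finU by (intro sum.neutral) (auto simp: NE_def chi_sum_zero)
    finally show ?thesis using finU cardU by (simp add: card_Pow)
  qed
  obtain A where A: "\<forall>E\<in>Pow U. A E \<in> sets lborel \<and> A E \<subseteq> {1<..1 + sum p (Pow U)} \<and> emeasure lborel (A E) = ennreal (p E)"
     and Adisj: "\<forall>E\<in>Pow U. \<forall>F\<in>Pow U. E \<noteq> F \<longrightarrow> A E \<inter> A F = {}"
    using exist_sets[of "Pow U" p] finU p_nonneg by auto
  have Asets: "A E \<in> sets lborel" and Asub: "A E \<subseteq> {1<..2}" and Ameas: "measure lborel (A E) = p E"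
    if "E \<in> Pow U" for E
    using A that p_sum p_nonneg by (auto simp: measure_def)
  define \<phi> where "\<phi> i x = (\<Sum>E\<in>Pow U. indicator (A E) x * sg i E)" for i x
  define h where "h i x = (if x \<in> {0..1} then g i x else D * \<phi> i x)" for i x
  have phi0: "\<phi> i x = 0" if "x \<notin> {1<..2}" for i x
    unfolding \<phi>_def using that Asub by (intro sum_ind0) blast
  have phi_in: "\<phi> i x = sg i E" if "E \<in> Pow U" "x \<in> A E" for i x E
    unfolding \<phi>_def using that finU Adisj by (intro sum_ind) auto
  have phi_bound: "\<bar>\<phi> i x\<bar> \<le> 1" for i x
  proof (cases "\<exists>E\<in>Pow U. x \<in> A E")
    case True
    then obtain E where "E \<in> Pow U" "x \<in> A E" by blast
    then show ?thesis using phi_in by (simp add: sg_def)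
  next
    case False
    then show ?thesis unfolding \<phi>_def by (simp add: sum_ind0)
  qed
  have phi_meas: "\<phi> i \<in> borel_measurable lborel" for i
    unfolding \<phi>_def by (intro borel_measurable_sum borel_measurable_times borel_measurable_indicator Asets) auto
  have prod_phi: "(\<Prod>i\<in>S. \<phi> i x) = (\<Sum>E\<in>Pow U. indicator (A E) x * chi S E)" if "S \<subseteq> U" "S \<noteq> {}" for S x
  proof (cases "\<exists>E\<in>Pow U. x \<in> A E")
    case True
    then obtain E where E: "E \<in> Pow U" "x \<in> A E" by blast
    then have "(\<Prod>i\<in>S. \<phi> i x) = chi S E" using phi_in by (simp add: chi_def)
    also have "\<dots> = (\<Sum>E\<in>Pow U. indicator (A E) x * chi S E)"
      using E finU Adisj by (intro sum_ind[symmetric]) auto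
    finally show ?thesis .
  next
    case False
    have fS: "finite S" using that finU finite_subset by blast
    have "(\<Prod>i\<in>S. \<phi> i x) = 0" using False fS that unfolding \<phi>_def
      by (simp add: sum_ind0 card_gt_0_iff)
    then show ?thesis using False by (simp add: sum_ind0)
  qed
  show ?thesis
  proof (intro exI[of _ h] conjI ballI allI impI)
    fix i assume i: "i \<in> {1..s}"
    have "(\<lambda>x. indicator {0..2} x *\<^sub>R h i x) = (\<lambda>x. indicator {0..1} x *\<^sub>R g i x + D * \<phi> i x)"
    proof
      fix x :: real
      show "indicator {0..2} x *\<^sub>R h i x = indicator {0..1} x *\<^sub>R g i x + D * \<phi> i x"
        unfolding h_def using phi0[of x i] by (auto simp: indicator_def)
    qed
    moreover have "(\<lambda>x. indicator {0..1} x *\<^sub>R g i x + D * \<phi> i x) \<in> borel_measurable lborel"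
      using meas[OF i] phi_meas unfolding set_borel_measurable_def by measurable
    ultimately show "set_borel_measurable lborel {0..2} (h i)"
      unfolding set_borel_measurable_def by simp
  next
    fix i x assume "i \<in> {1..s}" "x \<in> {0..1::real}"
    then show "h i x = g i x" unfolding h_def by auto
  next
    fix i x assume i: "i \<in> {1..s}" and x: "x \<in> {0..2::real}"
    show "\<bar>h i x\<bar> \<le> D"
    proof (cases "x \<in> {0..1}")
      case True then show ?thesis using bound[OF i] unfolding h_def by simp
    next
      case False
      have "\<bar>D * \<phi> i x\<bar> \<le> D * 1" using Dpos phi_bound[of i x] by (simp add: abs_mult)
      then show ?thesis using False unfolding h_def by auto
    qed
  next
    fix S assume S: "S \<subseteq> {1..s} \<and> S \<noteq> {}"
    then have SU: "S \<subseteq> U" "S \<noteq> {}" unfolding U_def by auto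
    have fS: "finite S" using SU finU finite_subset by blast
    define n where "n = card S"
    define P1 where "P1 x = indicator {0..1} x *\<^sub>R (\<Prod>i\<in>S. g i x / D)" for x
    define P2 where "P2 x = (\<Sum>E\<in>Pow U. indicator (A E) x * chi S E)" for x
    have pt: "indicator {0..2} x *\<^sub>R (\<Prod>i\<in>S. h i x) = D ^ n * P1 x + D ^ n * P2 x" for x
    proof -
      consider "x \<in> {0..1}" | "x \<in> {1<..2}" | "x \<notin> {0..2}"
      proof -
        have "(0 \<le> x \<and> x \<le> 1) \<or> (1 < x \<and> x \<le> 2) \<or> \<not> (0 \<le> x \<and> x \<le> 2)" by linarith
        then show ?thesis using that by auto
      qed
      then show ?thesis
      proof cases
        case 1
        have "x \<notin> A E" if "E \<in> Pow U" for E using Asub[OF that] 1 by auto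
        then have P2: "P2 x = 0" unfolding P2_def by (intro sum_ind0) blast
        have "D ^ n * (\<Prod>i\<in>S. g i x / D) = (\<Prod>i\<in>S. g i x)"
          using Dpos by (simp add: prod_dividef n_def)
        then show ?thesis using 1 P2 unfolding P1_def h_def by simp
      next
        case 2
        have "(\<Prod>i\<in>S. h i x) = (\<Prod>i\<in>S. D * \<phi> i x)" using 2 unfolding h_def by simp
        also have "\<dots> = D ^ n * P2 x" unfolding P2_def n_def
          by (simp add: prod.distrib prod_phi[OF SU])
        finally show ?thesis using 2 unfolding P1_def by simp
      next
        case 3
        have "x \<notin> A E" if "E \<in> Pow U" for E using Asub[OF that] 3 by auto
        then have P2: "P2 x = 0" unfolding P2_def by (intro sum_ind0) blast
        then show ?thesis using 3 unfolding P1_def by (auto simp: indicator_def)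
      qed
    qed
    have P1_alt: "P1 = (\<lambda>x. \<Prod>i\<in>S. indicator {0..1} x *\<^sub>R g i x / D)"
    proof
      fix x
      show "P1 x = (\<Prod>i\<in>S. indicator {0..1} x *\<^sub>R g i x / D)"
        using SU fS unfolding P1_def by (cases "x \<in> {0..1}") auto
    qed
    have P1_meas: "P1 \<in> borel_measurable lborel"
      unfolding P1_alt using meas SU unfolding set_borel_measurable_def U_def
      by (intro borel_measurable_prod borel_measurable_divide) auto
    have P1_int: "integrable lborel P1"
    proof (rule integrableI_bounded_set[where A="{0..1}" and B=1])
      show "AE x in lborel. x \<in> {0..1} \<longrightarrow> norm (P1 x) \<le> 1"
      proof (rule AE_I2, rule impI)
        fix x :: real assume x: "x \<in> {0..1}"
        have "\<bar>\<Prod>i\<in>S. g i x / D\<bar> = (\<Prod>i\<in>S. \<bar>g i x / D\<bar>)" by (simp add: abs_prod)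
        also have "\<dots> \<le> 1"
        proof (rule prod_le_1)
          fix i assume "i \<in> S"
          then have "\<bar>g i x\<bar> \<le> D" using bound x SU unfolding U_def by auto
          moreover have "\<bar>g i x / D\<bar> = \<bar>g i x\<bar> / D" using Dpos by (simp add: abs_divide)
          ultimately have "\<bar>g i x / D\<bar> \<le> 1" using Dpos by (simp add: divide_le_eq)
          then show "0 \<le> \<bar>g i x / D\<bar> \<and> \<bar>g i x / D\<bar> \<le> 1" by simp
        qed
        finally show "norm (P1 x) \<le> 1" using x unfolding P1_def by simp
      qed
    qed (use P1_meas in \<open>auto simp: P1_def\<close>)
    have intE: "integrable lborel (\<lambda>x. indicator (A E) x * chi S E)" if "E \<in> Pow U" for E
    proof -
      have "integrable lborel (indicator (A E) :: real \<Rightarrow> real)"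
        using A that by (intro integrable_real_indicator) auto
      then show ?thesis by simp
    qed
    have P2_int: "integrable lborel P2"
    proof -
      have "integrable lborel (\<lambda>x. \<Sum>E\<in>Pow U. indicator (A E) x * chi S E)"
        by (intro Bochner_Integration.integrable_sum intE)
      then show ?thesis unfolding P2_def[abs_def] .
    qed
    have IP1: "integral\<^sup>L lborel P1 = a S"
      unfolding P1_def a_def set_lebesgue_integral_def by simp
    have IP2: "integral\<^sup>L lborel P2 = (\<Sum>E\<in>Pow U. p E * chi S E)"
      unfolding P2_def using intE Ameas
      by (subst Bochner_Integration.integral_sum) (auto intro!: sum.cong)
    have "(LINT x:{0..2}|lborel. (\<Prod>i\<in>S. h i x)) = integral\<^sup>L lborel (\<lambda>x. D ^ n * P1 x + D ^ n * P2 x)"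
      unfolding set_lebesgue_integral_def pt ..
    also have "\<dots> = D ^ n * a S + D ^ n * (\<Sum>E\<in>Pow U. p E * chi S E)"
      using P1_int P2_int IP1 IP2 by simp
    also have "\<dots> = 0" using p_char[of S] SU by (simp add: NE_def)
    finally show "(LINT x:{0..2}|lborel. (\<Prod>i\<in>S. h i x)) = 0" .
  qed
qed

end
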